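(* Fix $\theta\in\mathbb R$ and let $\tau^\star(\theta)$ be the equalizing prejudice. Then for $\tau\in(-x_u,x_q)$, $s_1(\theta,\tau)>s_2(\theta,\tau)$ if and only if $\tau>\tau^\star(\theta)$ (equivalently, $s_1(\theta,\tau)<s_2(\theta,\tau)$ iff $\tau<\tau^\star(\theta)$).
   Context: Setup. Let $Q\in\{0,1\}$ be a random variable with $\mathbb P(Q=1)=\pi\in(0,1)$, and let $(\Theta,\Gamma)$ be a real-valued random vector whose conditional joint density given $Q=1$ is $h_q(\theta,\gamma)$ and given $Q=0$ is $h_u(\theta,\gamma)$, both strictly positive on $\mathbb R^2$. Monotone likelihood ratio assumption: $l(\theta,\gamma)=h_q(\theta,\gamma)/h_u(\theta,\gamma)$ is continuous and strictly increasing in each of $\theta$ and $\gamma$, and for each $\theta$ the map $\gamma\mapsto l(\theta,\gamma)$ has infimum $0$ and supremum $+\infty$. Fix payoffs $x_q>0$, $x_u>0$. For $\tau\in(-x_u,x_q)$ let $A(\tau)=\mathbb 1\{l(\Theta,\Gamma)>\frac{(1-\pi)(x_u+\tau)}{\pi(x_q-\tau)}\}$. Define $s_1(\theta,\tau)=\mathbb E[Q\mid\Theta=\theta,A(\tau)=1]$ and $s_2(\theta,\tau)=\mathbb E[A(\tau)\mid\Theta=\theta]$. The equalizing prejudice $\tau^\star(\theta)$ is the unique $\tau\in(-x_u,x_q)$ with $s_1(\theta,\tau)=s_2(\theta,\tau)$. *)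

theory Defs
  imports "HOL-Analysis.Analysis"
begin

text \<open>Setting: Q in {0,1} with P(Q=1) = pr; (Theta,Gamma) has conditional joint
  density hq given Q=1 and hu given Q=0 (with respect to Lebesgue measure on R^2).\<close>

definition lik_ratio :: "(real \<Rightarrow> real \<Rightarrow> real) \<Rightarrow> (real \<Rightarrow> real \<Rightarrow> real) \<Rightarrow> real \<Rightarrow> real \<Rightarrow> real" where
  "lik_ratio hq hu t g = hq t g / hu t g"

definition threshold :: "real \<Rightarrow> real \<Rightarrow> real \<Rightarrow> real \<Rightarrow> real" where
  "threshold pr xq xu tau = ((1 - pr) * (xu + tau)) / (pr * (xq - tau))"

definition accept_set ::
  "real \<Rightarrow> real \<Rightarrow> real \<Rightarrow> (real \<Rightarrow> real \<Rightarrow> real) \<Rightarrow> (real \<Rightarrow> real \<Rightarrow> real) \<Rightarrow> real \<Rightarrow> real \<Rightarrow> real set" where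
  "accept_set pr xq xu hq hu t tau = {g. lik_ratio hq hu t g > threshold pr xq xu tau}"

definition theta_density ::
  "real \<Rightarrow> (real \<Rightarrow> real \<Rightarrow> real) \<Rightarrow> (real \<Rightarrow> real \<Rightarrow> real) \<Rightarrow> real \<Rightarrow> real" where
  "theta_density pr hq hu t = pr * (\<integral>g. hq t g \<partial>lborel) + (1 - pr) * (\<integral>g. hu t g \<partial>lborel)"

definition prob_QA_given ::
  "real \<Rightarrow> real \<Rightarrow> real \<Rightarrow> (real \<Rightarrow> real \<Rightarrow> real) \<Rightarrow> (real \<Rightarrow> real \<Rightarrow> real) \<Rightarrow> real \<Rightarrow> real \<Rightarrow> real" where
  "prob_QA_given pr xq xu hq hu t tau =
     pr * (LINT g:accept_set pr xq xu hq hu t tau|lborel. hq t g) / theta_density pr hq hu t"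

definition prob_A_given ::
  "real \<Rightarrow> real \<Rightarrow> real \<Rightarrow> (real \<Rightarrow> real \<Rightarrow> real) \<Rightarrow> (real \<Rightarrow> real \<Rightarrow> real) \<Rightarrow> real \<Rightarrow> real \<Rightarrow> real" where
  "prob_A_given pr xq xu hq hu t tau =
     (pr * (LINT g:accept_set pr xq xu hq hu t tau|lborel. hq t g)
      + (1 - pr) * (LINT g:accept_set pr xq xu hq hu t tau|lborel. hu t g)) / theta_density pr hq hu t"

text \<open>s1(t,tau) = E[Q | Theta = t, A(tau) = 1].\<close>
definition s1 ::
  "real \<Rightarrow> real \<Rightarrow> real \<Rightarrow> (real \<Rightarrow> real \<Rightarrow> real) \<Rightarrow> (real \<Rightarrow> real \<Rightarrow> real) \<Rightarrow> real \<Rightarrow> real \<Rightarrow> real" where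
  "s1 pr xq xu hq hu t tau = prob_QA_given pr xq xu hq hu t tau / prob_A_given pr xq xu hq hu t tau"

text \<open>s2(t,tau) = E[A(tau) | Theta = t].\<close>
definition s2 ::
  "real \<Rightarrow> real \<Rightarrow> real \<Rightarrow> (real \<Rightarrow> real \<Rightarrow> real) \<Rightarrow> (real \<Rightarrow> real \<Rightarrow> real) \<Rightarrow> real \<Rightarrow> real \<Rightarrow> real" where
  "s2 pr xq xu hq hu t tau = prob_A_given pr xq xu hq hu t tau"

definition tau_star ::
  "real \<Rightarrow> real \<Rightarrow> real \<Rightarrow> (real \<Rightarrow> real \<Rightarrow> real) \<Rightarrow> (real \<Rightarrow> real \<Rightarrow> real) \<Rightarrow> real \<Rightarrow> real" where
  "tau_star pr xq xu hq hu t =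
     (THE tau. tau \<in> {-xu<..<xq} \<and> s1 pr xq xu hq hu t tau = s2 pr xq xu hq hu t tau)"

end

theory Submission
  imports Defs
begin


definition T :: "(real \<Rightarrow> real) \<Rightarrow> real \<Rightarrow> real" where
  "T h a = (\<integral>g. indicator {a<..} g * h g \<partial>lborel)"

lemma int_ind:
  assumes "integrable lborel (h::real\<Rightarrow>real)" "S \<in> sets borel"
  shows "integrable lborel (\<lambda>g. indicator S g * h g)"
  using integrable_mult_indicator[of S lborel h] assms by simp

lemma T_split:
  assumes "integrable lborel (h::real\<Rightarrow>real)" "a \<le> b"
  shows "T h a = (\<integral>g. indicator {a<..b} g * h g \<partial>lborel) + T h b"
proof -
  have "\<And>g. indicator {a<..} g * h g = indicator {a<..b} g * h g + indicator {b<..} g * h g"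
    using assms(2) by (auto split: split_indicator)
  then have "T h a = (\<integral>g. indicator {a<..b} g * h g + indicator {b<..} g * h g \<partial>lborel)"
    unfolding T_def by presburger
  also have "\<dots> = (\<integral>g. indicator {a<..b} g * h g \<partial>lborel) + T h b"
    unfolding T_def by (rule Bochner_Integration.integral_add) (rule int_ind[OF assms(1)], simp)+
  finally show ?thesis .
qed

lemma pos_Ioc:
  assumes "integrable lborel (h::real\<Rightarrow>real)" "\<And>g. h g > 0" "a < b"
  shows "(\<integral>g. indicator {a<..b} g * h g \<partial>lborel) > 0"
proof -
  have i: "integrable lborel (\<lambda>g. indicator {a<..b} g * h g)" by (rule int_ind[OF assms(1)]) simp
  have nn: "AE g in lborel. 0 \<le> indicator {a<..b} g * h g"
    using assms(2) by (auto intro!: AE_I2 simp: less_imp_le)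
  have ge: "(\<integral>g. indicator {a<..b} g * h g \<partial>lborel) \<ge> 0"
    using assms(2) by (intro integral_nonneg_AE) (auto intro!: AE_I2 simp: less_imp_le)
  have "\<not> (AE g in lborel. indicator {a<..b} g * h g = 0)"
  proof
    assume "AE g in lborel. indicator {a<..b} g * h g = 0"
    then have "AE g in lborel. g \<notin> {a<..b}"
      by eventually_elim (use assms(2) in \<open>auto split: split_indicator simp: less_imp_neq[symmetric]\<close>)
    then have "emeasure lborel {a<..b} = 0"
      by (subst AE_iff_measurable[symmetric, where P="\<lambda>g. g \<notin> {a<..b}"]) auto
    with assms(3) show False by simp
  qed
  with integral_nonneg_eq_0_iff_AE[OF i nn] ge show ?thesis by linarith
qed

lemma T_nonneg:
  assumes "\<And>g. h g > 0"
  shows "T h a \<ge> 0"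
  unfolding T_def using assms by (intro integral_nonneg_AE) (auto intro!: AE_I2 simp: less_imp_le)

lemma T_pos:
  assumes "integrable lborel (h::real\<Rightarrow>real)" "\<And>g. h g > 0"
  shows "T h a > 0"
  using T_split[OF assms(1), where a=a and b="a+1"] pos_Ioc[OF assms, where a=a and b="a+1"] T_nonneg[of h "a+1"] assms(2)
  by simp

lemma T_cont:
  assumes "integrable lborel (h::real\<Rightarrow>real)"
  shows "isCont (T h) a"
  unfolding isCont_def tendsto_at_iff_sequentially
proof (intro allI impI)
  fix X :: "nat \<Rightarrow> real" assume X: "\<forall>i. X i \<in> UNIV - {a}" "X \<longlonglongrightarrow> a"
  show "(T h \<circ> X) \<longlonglongrightarrow> T h a"
    unfolding T_def o_def
  proof (rule integral_dominated_convergence[where w="\<lambda>g. norm (h g)"])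
    show "integrable lborel (\<lambda>g. norm (h g))" using assms by simp
    show "(\<lambda>g. indicator {a<..} g * h g) \<in> borel_measurable lborel"
      using int_ind[OF assms, of "{a<..}"] by simp
    show "\<And>i. (\<lambda>g. indicator {X i<..} g * h g) \<in> borel_measurable lborel"
      using int_ind[OF assms] by simp
    show "AE g in lborel. (\<lambda>i. indicator {X i<..} g * h g) \<longlonglongrightarrow> indicator {a<..} g * h g"
      using AE_lborel_singleton[of a]
    proof eventually_elim
      fix g assume "g \<noteq> a"
      show "(\<lambda>i. indicator {X i<..} g * h g) \<longlonglongrightarrow> indicator {a<..} g * h g"
      proof (cases "g < a")
        case True
        then have "eventually (\<lambda>i. X i > g) sequentially" using order_tendstoD(1)[OF X(2)] by blast
        then have "eventually (\<lambda>i. indicator {X i<..} g * h g = indicator {a<..} g * h g) sequentially"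
          by eventually_elim (use True in auto)
        then show ?thesis by (rule tendsto_eventually)
      next
        case False
        then have "g > a" using \<open>g \<noteq> a\<close> by simp
        then have "eventually (\<lambda>i. X i < g) sequentially" using order_tendstoD(2)[OF X(2)] by blast
        then have "eventually (\<lambda>i. indicator {X i<..} g * h g = indicator {a<..} g * h g) sequentially"
          by eventually_elim (use \<open>g > a\<close> in auto)
        then show ?thesis by (rule tendsto_eventually)
      qed
    qed
    show "\<And>i. AE g in lborel. norm (indicator {X i<..} g * h g) \<le> norm (h g)"
      by (auto intro!: AE_I2 split: split_indicator)
  qed
qed

lemma T_top:
  assumes "integrable lborel (h::real\<Rightarrow>real)"
  shows "(T h \<longlongrightarrow> 0) at_top"
proof (rule tendsto_at_topI_sequentially)
  fix X :: "nat \<Rightarrow> real" assume X: "filterlim X at_top sequentially"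
  have m1: "integrable lborel (\<lambda>g. norm (h g))" using assms by simp
  have m2: "\<And>i. (\<lambda>g. indicator {X i<..} g * h g) \<in> borel_measurable lborel"
      using int_ind[OF assms] by simp
  have m3: "AE g in lborel. (\<lambda>i. indicator {X i<..} g * h g) \<longlonglongrightarrow> (\<lambda>g. 0::real) g"
    proof (rule AE_I2)
      fix g
      have "eventually (\<lambda>n. g \<le> X n) sequentially" using X unfolding filterlim_at_top by auto
      then have "eventually (\<lambda>i. indicator {X i<..} g * h g = 0) sequentially"
        by eventually_elim auto
      then show "(\<lambda>i. indicator {X i<..} g * h g) \<longlonglongrightarrow> (\<lambda>g. 0::real) g" by (simp add: tendsto_eventually)
    qed
  have m4: "\<And>i. AE g in lborel. norm (indicator {X i<..} g * h g) \<le> norm (h g)"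
      by (auto intro!: AE_I2 split: split_indicator)
  have m0: "(\<lambda>g. 0::real) \<in> borel_measurable lborel" by simp
  from integral_dominated_convergence[OF m0 m2 m1 m3 m4]
  show "(\<lambda>n. T h (X n)) \<longlonglongrightarrow> 0" unfolding T_def by simp
qed

lemma T_bot:
  assumes "integrable lborel (h::real\<Rightarrow>real)"
  shows "(T h \<longlongrightarrow> (\<integral>g. h g \<partial>lborel)) at_bot"
proof (rule tendsto_at_botI_sequentially)
  fix X :: "nat \<Rightarrow> real" assume X: "filterlim X at_bot sequentially"
  have "(\<lambda>n. \<integral>g. indicator {X n<..} g * h g \<partial>lborel) \<longlonglongrightarrow> (\<integral>g. h g \<partial>lborel)"
  proof (rule integral_dominated_convergence[where w="\<lambda>g. norm (h g)"])
    show "integrable lborel (\<lambda>g. norm (h g))" using assms by simp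
    show "h \<in> borel_measurable lborel" using assms by simp
    show "\<And>i. (\<lambda>g. indicator {X i<..} g * h g) \<in> borel_measurable lborel"
      using int_ind[OF assms] by simp
    show "AE g in lborel. (\<lambda>i. indicator {X i<..} g * h g) \<longlonglongrightarrow> h g"
    proof (rule AE_I2)
      fix g
      have "eventually (\<lambda>n. X n \<le> g - 1) sequentially" using X unfolding filterlim_at_bot by auto
      then have "eventually (\<lambda>i. indicator {X i<..} g * h g = h g) sequentially"
        by eventually_elim auto
      then show "(\<lambda>i. indicator {X i<..} g * h g) \<longlonglongrightarrow> h g" by (rule tendsto_eventually)
    qed
    show "\<And>i. AE g in lborel. norm (indicator {X i<..} g * h g) \<le> norm (h g)"
      by (auto intro!: AE_I2 split: split_indicator)
  qed
  then show "(\<lambda>n. T h (X n)) \<longlonglongrightarrow> (\<integral>g. h g \<partial>lborel)" unfolding T_def by simp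
qed



lemma lint_T: "(LINT g:{a<..}|lborel. h g) = T h a"
  by (simp add: set_lebesgue_integral_def T_def)

lemma thr_pos:
  assumes "0 < pr" "pr < 1" "xq > 0" "xu > 0" "tau \<in> {-xu<..<xq}"
  shows "threshold pr xq xu tau > 0"
  using assms unfolding threshold_def by (auto intro!: divide_pos_pos mult_pos_pos)

lemma thr_mono:
  assumes "0 < pr" "pr < 1" "xq > 0" "xu > 0" "t1 \<in> {-xu<..<xq}" "t2 \<in> {-xu<..<xq}" "t1 < t2"
  shows "threshold pr xq xu t1 < threshold pr xq xu t2"
proof -
  have d1: "pr * (xq - t1) > 0" "pr * (xq - t2) > 0" using assms by auto
  have "((1 - pr) * (xu + t1)) * (pr * (xq - t2)) < ((1 - pr) * (xu + t2)) * (pr * (xq - t1))"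
  proof -
    have "(xu + t1) * (xq - t2) < (xu + t2) * (xq - t1)"
    proof -
      have "(xu + t2) * (xq - t1) - (xu + t1) * (xq - t2) = (t2 - t1) * (xu + xq)" by algebra
      moreover have "(t2 - t1) * (xu + xq) > 0" using assms by auto
      ultimately show ?thesis by linarith
    qed
    moreover have "(1 - pr) * pr > 0" using assms by auto
    ultimately have "((1 - pr) * pr) * ((xu + t1) * (xq - t2)) < ((1 - pr) * pr) * ((xu + t2) * (xq - t1))"
      by (intro mult_strict_left_mono) auto
    then show ?thesis by (simp add: algebra_simps)
  qed
  moreover have "xq - t1 > 0" "xq - t2 > 0" "1 - pr > 0" using assms by auto
  ultimately show ?thesis unfolding threshold_def using d1 assms(1)
    by (simp add: divide_less_eq less_divide_eq mult.commute mult.left_commute mult.assoc)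
qed

lemma thr_inv:
  assumes "0 < pr" "pr < 1" "xq > 0" "xu > 0" "y > 0"
  defines "t \<equiv> (pr * xq * y - (1 - pr) * xu) / ((1 - pr) + pr * y)"
  shows "t \<in> {-xu<..<xq}" "threshold pr xq xu t = y"
proof -
  have den: "(1 - pr) + pr * y > 0" using assms by (simp add: add_pos_nonneg)
  have e1: "xu + t = pr * y * (xu + xq) / ((1 - pr) + pr * y)"
    unfolding t_def using den by (simp add: field_simps)
  have e2: "xq - t = (1 - pr) * (xu + xq) / ((1 - pr) + pr * y)"
    unfolding t_def using den by (simp add: field_simps)
  have "xu + t > 0" unfolding e1 using assms den by (auto intro!: divide_pos_pos mult_pos_pos)
  moreover have "xq - t > 0" unfolding e2 using assms den by (auto intro!: divide_pos_pos mult_pos_pos)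
  ultimately show "t \<in> {-xu<..<xq}" by auto
  show "threshold pr xq xu t = y"
  proof -
    have B: "pr * (xq - t) > 0" using \<open>xq - t > 0\<close> assms by simp
    have "(1 - pr) * (xu + t) = y * (pr * (xq - t))" unfolding e1 e2 by (simp add: algebra_simps)
    then show ?thesis unfolding threshold_def using B assms(1) \<open>xq - t > 0\<close> by simp
  qed
qed



theorem mainTheorem5:
  fixes pr xq xu \<theta> tau :: real
    and hq hu :: "real \<Rightarrow> real \<Rightarrow> real"
  assumes pr: "0 < pr" "pr < 1"
    and payoffs: "xq > 0" "xu > 0"
    and hq_pos: "\<And>t g. hq t g > 0"
    and hu_pos: "\<And>t g. hu t g > 0"
    and hq_meas: "(\<lambda>p. hq (fst p) (snd p)) \<in> borel_measurable (lborel :: (real \<times> real) measure)"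
    and hu_meas: "(\<lambda>p. hu (fst p) (snd p)) \<in> borel_measurable (lborel :: (real \<times> real) measure)"
    and hq_int: "integrable (lborel :: (real \<times> real) measure) (\<lambda>p. hq (fst p) (snd p))"
    and hu_int: "integrable (lborel :: (real \<times> real) measure) (\<lambda>p. hu (fst p) (snd p))"
    and hq_one: "(\<integral>p. hq (fst p) (snd p) \<partial>(lborel :: (real \<times> real) measure)) = 1"
    and hu_one: "(\<integral>p. hu (fst p) (snd p) \<partial>(lborel :: (real \<times> real) measure)) = 1"
    and sec_q: "integrable lborel (\<lambda>g. hq \<theta> g)"
    and sec_u: "integrable lborel (\<lambda>g. hu \<theta> g)"
    and l_cont: "continuous_on UNIV (\<lambda>p. lik_ratio hq hu (fst p) (snd p))"
    and l_mono_t: "\<And>g. strict_mono (\<lambda>t. lik_ratio hq hu t g)"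
    and l_mono_g: "\<And>t. strict_mono (\<lambda>g. lik_ratio hq hu t g)"
    and l_inf: "\<And>t. (INF g. lik_ratio hq hu t g) = 0"
    and l_sup: "\<And>t. \<not> bdd_above (range (\<lambda>g. lik_ratio hq hu t g))"
    and tau: "tau \<in> {-xu<..<xq}"
  shows "(s1 pr xq xu hq hu \<theta> tau > s2 pr xq xu hq hu \<theta> tau
            \<longleftrightarrow> tau > tau_star pr xq xu hq hu \<theta>)
       \<and> (s1 pr xq xu hq hu \<theta> tau < s2 pr xq xu hq hu \<theta> tau
            \<longleftrightarrow> tau < tau_star pr xq xu hq hu \<theta>)"
proof -
  define L where "L = (\<lambda>g. lik_ratio hq hu \<theta> g)"
  define thr where "thr = threshold pr xq xu"
  define cut where "cut = (\<lambda>c. THE g. L g = c)"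
  define Tq where "Tq = T (hq \<theta>)"
  define Tu where "Tu = T (hu \<theta>)"
  define P where "P = (\<lambda>a. pr * Tq a + (1 - pr) * Tu a)"
  define D where "D = theta_density pr hq hu \<theta>"
  define \<Phi> where "\<Phi> = (\<lambda>a. pr * Tq a / P a - P a / D)"
  define I where "I = {-xu<..<xq}"
  have sq: "integrable lborel (hq \<theta>)" using sec_q by simp
  have su: "integrable lborel (hu \<theta>)" using sec_u by simp
  have Lsm: "strict_mono L" using l_mono_g[of \<theta>] unfolding L_def .
  have hqL: "hq \<theta> g = L g * hu \<theta> g" for g
    using hu_pos[of \<theta> g] unfolding L_def lik_ratio_def by simp
  have Lpos: "L g > 0" for g
    using hu_pos[of \<theta> g] hq_pos[of \<theta> g] unfolding L_def lik_ratio_def by simp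
  have Lc: "isCont L g" for g
  proof -
    have c2: "isCont (\<lambda>p. lik_ratio hq hu (fst p) (snd p)) (\<theta>, g)"
      by (rule continuous_on_interior[OF l_cont]) simp
    have c1: "isCont (Pair \<theta>) g" by (intro continuous_intros)
    from isCont_o2[OF c1 c2] show ?thesis unfolding L_def by simp
  qed
  have Lex: "\<exists>g. L g = c" if c: "c > 0" for c
  proof -
    obtain g1 where g1: "L g1 < c"
    proof (rule ccontr)
      assume "\<not> thesis"
      then have "\<forall>g. c \<le> L g" using that by (meson not_le)
      then have "c \<le> (INF g. L g)" by (intro cINF_greatest) auto
      with l_inf[of \<theta>] c show False unfolding L_def by simp
    qed
    obtain g2 where g2: "L g2 > c"
    proof (rule ccontr)
      assume "\<not> thesis"
      then have "\<forall>g. L g \<le> c" using that by (meson not_le)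
      then have "bdd_above (range L)" by (auto intro: bdd_aboveI)
      with l_sup[of \<theta>] show False unfolding L_def by simp
    qed
    have "g1 < g2" using g1 g2 strict_mono_less[OF Lsm] by (meson less_trans)
    then have "\<exists>x. g1 \<le> x \<and> x \<le> g2 \<and> L x = c"
      using g1 g2 by (intro IVT') (auto intro!: continuous_at_imp_continuous_on Lc)
    then show ?thesis by blast
  qed
  have Linj: "L x = L y \<Longrightarrow> x = y" for x y using strict_mono_eq[OF Lsm, of x y] by simp
  have cutL: "L (cut c) = c" if cpos: "c > 0" for c
  proof -
    obtain g0 where g0: "L g0 = c" using Lex[OF cpos] by blast
    have "\<exists>!g. L g = c"
    proof (rule ex1I[of _ g0])
      show "L g0 = c" by (rule g0)
      fix y assume yc: "L y = c" show "y = g0" by (rule Linj) (simp add: g0 yc)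
    qed
    then show ?thesis unfolding cut_def by (rule theI'[of "\<lambda>g. L g = c"])
  qed
  have cutLL: "cut (L a) = a" for a using cutL[OF Lpos[of a]] by (rule Linj)
  have acc: "accept_set pr xq xu hq hu \<theta> tau' = {cut (thr tau')<..}" if "tau' \<in> I" for tau'
  proof -
    have p: "thr tau' > 0" unfolding thr_def using thr_pos[OF pr payoffs] that I_def by simp
    have "accept_set pr xq xu hq hu \<theta> tau' = {g. L g > thr tau'}"
      unfolding accept_set_def L_def thr_def by simp
    also have "\<dots> = {g. L g > L (cut (thr tau'))}" by (subst cutL[OF p]) (rule refl)
    also have "\<dots> = {cut (thr tau')<..}" using strict_mono_less[OF Lsm] by auto
    finally show ?thesis .
  qed
  have hqp: "\<And>g. hq \<theta> g > 0" using hq_pos by simp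
  have hup: "\<And>g. hu \<theta> g > 0" using hu_pos by simp
  have Tqpos: "Tq a > 0" for a unfolding Tq_def by (rule T_pos[OF sq hqp])
  have Tupos: "Tu a > 0" for a unfolding Tu_def by (rule T_pos[OF su hup])
  have Ppos: "P a > 0" for a unfolding P_def using Tqpos[of a] Tupos[of a] pr by (simp add: add_pos_pos)
  have intge: "(\<integral>g. h g \<partial>lborel) \<ge> T h a" if "integrable lborel h" "\<And>g. (h::real\<Rightarrow>real) g > 0" for h a
    unfolding T_def
    by (rule integral_mono[OF int_ind[OF that(1)] that(1)]) (use that(2) in \<open>auto simp: less_imp_le split: split_indicator\<close>)
  have Deq: "D = pr * (\<integral>g. hq \<theta> g \<partial>lborel) + (1 - pr) * (\<integral>g. hu \<theta> g \<partial>lborel)"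
    unfolding D_def theta_density_def by simp
  have Dge: "D \<ge> P a" for a
    unfolding Deq P_def Tq_def Tu_def using intge[OF sq hqp, of a] intge[OF su hup, of a] pr
    by (intro add_mono mult_left_mono) auto
  have Dpos: "D > 0" using Dge[of 0] Ppos[of 0] by simp
  define Iq where "Iq = (\<lambda>a b. \<integral>g. indicator {a<..b} g * hq \<theta> g \<partial>lborel)"
  define Iu where "Iu = (\<lambda>a b. \<integral>g. indicator {a<..b} g * hu \<theta> g \<partial>lborel)"
  have splq: "Tq a = Iq a b + Tq b" if "a \<le> b" for a b unfolding Tq_def Iq_def by (rule T_split[OF sq that])
  have splu: "Tu a = Iu a b + Tu b" if "a \<le> b" for a b unfolding Tu_def Iu_def by (rule T_split[OF su that])
  have Iqpos: "Iq a b > 0" if "a < b" for a b unfolding Iq_def by (rule pos_Ioc[OF sq hqp that])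
  have Iupos: "Iu a b > 0" if "a < b" for a b unfolding Iu_def by (rule pos_Ioc[OF su hup that])
  have Iq_le: "Iq a b \<le> L b * Iu a b" for a b
  proof -
    have "Iq a b \<le> (\<integral>g. L b * (indicator {a<..b} g * hu \<theta> g) \<partial>lborel)"
      unfolding Iq_def
    proof (rule integral_mono)
      show "integrable lborel (\<lambda>g. indicator {a<..b} g * hq \<theta> g)" by (rule int_ind[OF sq]) simp
      show "integrable lborel (\<lambda>g. L b * (indicator {a<..b} g * hu \<theta> g))"
        by (intro integrable_mult_right int_ind[OF su]) simp
      fix g
      show "indicator {a<..b} g * hq \<theta> g \<le> L b * (indicator {a<..b} g * hu \<theta> g)"
      proof (cases "g \<in> {a<..b}")
        case True
        then have "L g \<le> L b" using strict_mono_less_eq[OF Lsm] by auto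
        then have "L g * hu \<theta> g \<le> L b * hu \<theta> g" using hup[of g] by (intro mult_right_mono) auto
        then show ?thesis using True hqL[of g] by simp
      qed simp
    qed
    also have "\<dots> = L b * Iu a b" unfolding Iu_def by simp
    finally show ?thesis .
  qed
  have Tq_ge: "Tq b \<ge> L b * Tu b" for b
  proof -
    have "(\<integral>g. L b * (indicator {b<..} g * hu \<theta> g) \<partial>lborel) \<le> Tq b"
      unfolding Tq_def T_def
    proof (rule integral_mono)
      show "integrable lborel (\<lambda>g. indicator {b<..} g * hq \<theta> g)" by (rule int_ind[OF sq]) simp
      show "integrable lborel (\<lambda>g. L b * (indicator {b<..} g * hu \<theta> g))"
        by (intro integrable_mult_right int_ind[OF su]) simp
      fix g
      show "L b * (indicator {b<..} g * hu \<theta> g) \<le> indicator {b<..} g * hq \<theta> g"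
      proof (cases "g \<in> {b<..}")
        case True
        then have "L b \<le> L g" using strict_mono_less_eq[OF Lsm] by auto
        then have "L b * hu \<theta> g \<le> L g * hu \<theta> g" using hup[of g] by (intro mult_right_mono) auto
        then show ?thesis using True hqL[of g] by simp
      qed simp
    qed
    moreover have "(\<integral>g. L b * (indicator {b<..} g * hu \<theta> g) \<partial>lborel) = L b * Tu b"
      unfolding Tu_def T_def by simp
    ultimately show ?thesis by linarith
  qed
  have Pmono: "P b < P a" if "a < b" for a b
  proof -
    have "P a = P b + (pr * Iq a b + (1 - pr) * Iu a b)"
      unfolding P_def using splq[of a b] splu[of a b] that by (simp add: algebra_simps)
    moreover have "pr * Iq a b + (1 - pr) * Iu a b > 0"
      using Iqpos[OF that] Iupos[OF that] pr by (simp add: add_pos_pos)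
    ultimately show ?thesis by simp
  qed
  have s1mono: "pr * Tq a / P a \<le> pr * Tq b / P b" if "a < b" for a b
  proof -
    have Lb: "L b > 0" by (rule Lpos)
    have key: "Tq a * Tu b \<le> Tq b * Tu a"
    proof -
      have "Iq a b * Tu b \<le> L b * Iu a b * Tu b"
        using Iq_le[of a b] Tupos[of b] by (intro mult_right_mono) auto
      also have "\<dots> = Iu a b * (L b * Tu b)" by simp
      also have "\<dots> \<le> Iu a b * Tq b"
        using Tq_ge[of b] Iupos[OF that] by (intro mult_left_mono) auto
      finally have "Iq a b * Tu b \<le> Iu a b * Tq b" .
      then show ?thesis using splq[of a b] splu[of a b] that by (simp add: algebra_simps)
    qed
    have "pr * Tq a * P b \<le> pr * Tq b * P a"
    proof -
      have "pr * Tq a * P b - pr * Tq b * P a = pr * (1 - pr) * (Tq a * Tu b - Tq b * Tu a)"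
        unfolding P_def by (simp add: algebra_simps)
      moreover have "pr * (1 - pr) * (Tq a * Tu b - Tq b * Tu a) \<le> 0"
        using key pr by (intro mult_nonneg_nonpos) auto
      ultimately show ?thesis by linarith
    qed
    then show ?thesis using Ppos[of a] Ppos[of b] by (simp add: divide_simps)
  qed
  have \<Phi>mono: "\<Phi> a < \<Phi> b" if "a < b" for a b
  proof -
    have "P b / D < P a / D" using Pmono[OF that] Dpos by (simp add: divide_strict_right_mono)
    then show ?thesis unfolding \<Phi>_def using s1mono[OF that] by simp
  qed
  have \<Phi>cont: "isCont \<Phi> a" for a
  proof -
    have cq: "isCont Tq a" unfolding Tq_def by (rule T_cont[OF sq])
    have cu: "isCont Tu a" unfolding Tu_def by (rule T_cont[OF su])
    have cP: "isCont P a" unfolding P_def using cq cu by (intro continuous_intros)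
    show ?thesis unfolding \<Phi>_def using cq cP Ppos[of a] Dpos
      by (intro continuous_intros) auto
  qed
  define q where "q = (\<integral>g. hq \<theta> g \<partial>lborel)"
  define u where "u = (\<integral>g. hu \<theta> g \<partial>lborel)"
  have upos: "u > 0" unfolding u_def using intge[OF su hup, of 0] Tupos[of 0] unfolding Tu_def by linarith
  have DE: "D = pr * q + (1 - pr) * u" unfolding Deq q_def u_def ..
  have limq: "(Tq \<longlongrightarrow> q) at_bot" unfolding Tq_def q_def by (rule T_bot[OF sq])
  have limu: "(Tu \<longlongrightarrow> u) at_bot" unfolding Tu_def u_def by (rule T_bot[OF su])
  have limE: "((\<lambda>a. pr * Tq a * D - P a * P a) \<longlongrightarrow> pr * q * D - D * D) at_bot"
    unfolding P_def DE by (intro tendsto_intros limq limu)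
  have neg: "pr * q * D - D * D < 0"
  proof -
    have "pr * q * D - D * D = - (D * ((1 - pr) * u))" unfolding DE by (simp add: algebra_simps)
    moreover have "D * ((1 - pr) * u) > 0" using Dpos upos pr by simp
    ultimately show ?thesis by linarith
  qed
  obtain a1 where a1: "pr * Tq a1 * D - P a1 * P a1 < 0"
    using eventually_happens'[OF _ order_tendstoD(2)[OF limE neg]] by auto
  have \<Phi>a1: "\<Phi> a1 < 0"
  proof -
    have "pr * Tq a1 / P a1 < P a1 / D"
      using a1 Ppos[of a1] Dpos by (simp add: divide_simps)
    then show ?thesis unfolding \<Phi>_def by simp
  qed
  obtain b0 where b0: "L b0 = 1" using Lex[of 1] by auto
  have limP: "(P \<longlongrightarrow> 0) at_top"
  proof -
    have "(Tq \<longlongrightarrow> 0) at_top" unfolding Tq_def by (rule T_top[OF sq])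
    moreover have "(Tu \<longlongrightarrow> 0) at_top" unfolding Tu_def by (rule T_top[OF su])
    ultimately have "(P \<longlongrightarrow> pr * 0 + (1 - pr) * 0) at_top" unfolding P_def by (intro tendsto_intros)
    then show ?thesis by simp
  qed
  have "eventually (\<lambda>a. P a < pr * D) at_top" using order_tendstoD(2)[OF limP] pr Dpos by simp
  moreover have "eventually (\<lambda>a. a \<ge> max b0 (a1 + 1)) at_top" by (rule eventually_ge_at_top)
  ultimately have "eventually (\<lambda>a. P a < pr * D \<and> a \<ge> max b0 (a1 + 1)) at_top"
    by (rule eventually_conj)
  then obtain a2 where a2: "P a2 < pr * D" "a2 \<ge> b0" "a2 \<ge> a1 + 1"
    using eventually_happens'[of at_top] by (auto simp: eventually_at_top_linorder)
  have \<Phi>a2: "\<Phi> a2 > 0"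
  proof -
    have "L a2 \<ge> 1" using b0 a2(2) strict_mono_less_eq[OF Lsm] by metis
    then have "Tu a2 \<le> L a2 * Tu a2" using Tupos[of a2] by simp
    then have "Tu a2 \<le> Tq a2" using Tq_ge[of a2] by linarith
    then have "(1 - pr) * Tu a2 \<le> (1 - pr) * Tq a2" using pr by (intro mult_left_mono) auto
    then have "P a2 \<le> Tq a2" unfolding P_def by (simp add: algebra_simps)
    then have "P a2 * P a2 \<le> Tq a2 * P a2" using Ppos[of a2] by (intro mult_right_mono) auto
    also have "\<dots> < Tq a2 * (pr * D)" using a2(1) Tqpos[of a2] by (intro mult_strict_left_mono) auto
    finally have "P a2 * P a2 < pr * Tq a2 * D" by (simp add: algebra_simps)
    then have "P a2 / D < pr * Tq a2 / P a2"
      using Ppos[of a2] Dpos by (simp add: divide_simps)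
    then show ?thesis unfolding \<Phi>_def by simp
  qed
  obtain a0 where a0: "\<Phi> a0 = 0"
  proof -
    have "\<exists>x. a1 \<le> x \<and> x \<le> a2 \<and> \<Phi> x = 0"
      using \<Phi>a1 \<Phi>a2 a2(3) by (intro IVT') (auto intro!: continuous_at_imp_continuous_on \<Phi>cont)
    then show ?thesis using that by blast
  qed
  define F where "F = (\<lambda>t. \<Phi> (cut (thr t)))"
  have thrpos: "thr t > 0" if "t \<in> I" for t unfolding thr_def using thr_pos[OF pr payoffs] that I_def by simp
  have sform: "s1 pr xq xu hq hu \<theta> t - s2 pr xq xu hq hu \<theta> t = F t" if t: "t \<in> I" for t
  proof -
    define c where "c = cut (thr t)"
    have A: "accept_set pr xq xu hq hu \<theta> t = {c<..}" unfolding c_def by (rule acc[OF t])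
    have e1: "prob_QA_given pr xq xu hq hu \<theta> t = pr * Tq c / D"
      unfolding prob_QA_given_def A lint_T Tq_def D_def ..
    have e2: "prob_A_given pr xq xu hq hu \<theta> t = P c / D"
      unfolding prob_A_given_def A lint_T Tq_def Tu_def D_def P_def ..
    have "s1 pr xq xu hq hu \<theta> t = pr * Tq c / P c"
      unfolding s1_def e1 e2 using Dpos Ppos[of c] by simp
    moreover have "s2 pr xq xu hq hu \<theta> t = P c / D" unfolding s2_def e2 ..
    ultimately show ?thesis unfolding F_def \<Phi>_def c_def by simp
  qed
  have Fmono: "F t1 < F t2" if "t1 \<in> I" "t2 \<in> I" "t1 < t2" for t1 t2
  proof -
    have "thr t1 < thr t2" unfolding thr_def using thr_mono[OF pr payoffs] that I_def by simp
    then have "L (cut (thr t1)) < L (cut (thr t2))" using cutL thrpos that by simp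
    then have "cut (thr t1) < cut (thr t2)" using strict_mono_less[OF Lsm] by simp
    then show ?thesis unfolding F_def by (rule \<Phi>mono)
  qed
  define t0 where "t0 = (pr * xq * L a0 - (1 - pr) * xu) / ((1 - pr) + pr * L a0)"
  have t0I: "t0 \<in> I" and thr0: "thr t0 = L a0"
    using thr_inv[OF pr payoffs Lpos[of a0]] unfolding t0_def I_def thr_def by auto
  have F0: "F t0 = 0" unfolding F_def thr0 cutLL a0 ..
  have Fiff: "F t > 0 \<longleftrightarrow> t > t0" "F t < 0 \<longleftrightarrow> t < t0" if "t \<in> I" for t
    using Fmono[OF that t0I] Fmono[OF t0I that] F0 by (cases t t0 rule: linorder_cases; auto)+
  have ts: "tau_star pr xq xu hq hu \<theta> = t0"
    unfolding tau_star_def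
  proof (rule the_equality)
    show "t0 \<in> {-xu<..<xq} \<and> s1 pr xq xu hq hu \<theta> t0 = s2 pr xq xu hq hu \<theta> t0"
      using t0I sform[OF t0I] F0 unfolding I_def by simp
    fix t assume "t \<in> {-xu<..<xq} \<and> s1 pr xq xu hq hu \<theta> t = s2 pr xq xu hq hu \<theta> t"
    then have tI: "t \<in> I" unfolding I_def by auto
    have "F t = 0" using sform[OF tI] \<open>t \<in> {-xu<..<xq} \<and> _\<close> by simp
    then show "t = t0" using Fiff[OF tI] by (cases t t0 rule: linorder_cases) auto
  qed
  have tI: "tau \<in> I" using tau unfolding I_def .
  show ?thesis unfolding ts using sform[OF tI] Fiff[OF tI] by auto
qed

end
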